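(* Let $H$, $\mathcal{R}$, $A$, $\mathcal{Q}$ be as in the context ($H$ factorisable). The formulas \[(h\otimes1)\triangleright a=\langle Sh,a_{(1)}\rangle a_{(2)}-1\langle Sh,a\rangle,\qquad (1\otimes g)\triangleright a=a_{(1)}\langle g,a_{(2)}\rangle-1\langle g,a\rangle,\qquad h,g\in H,\ a\in\ker\epsilon\subset A,\] define an action of the algebra $H\otimes H$ on $\ker\epsilon\subset A$, and its pull-back along the algebra isomorphism $\theta:H\bowtie A^{\rm op}\to H\otimes H$, \[\theta(h\otimes a)=h_{(1)}\mathcal{R}^{-(2)}\otimes h_{(2)}\mathcal{R}^{(1)}\,\langle\mathcal{R}^{-(1)}\mathcal{R}^{(2)},a\rangle,\] is the action of $H\bowtie A^{\rm op}$ on $\ker\epsilon\subset A$ given by $h\triangleright a=a_{(2)}\langle h,(Sa_{(1)})a_{(3)}\rangle$ and $b\triangleright a=\langle b,\mathcal{R}'^{(1)}\mathcal{R}^{(2)}\rangle\langle a_{(1)},\mathcal{R}'^{(2)}\rangle\langle a_{(3)},\mathcal{R}^{(1)}\rangle a_{(2)}-\langle b,\mathcal{Q}(a)\rangle1$.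
   Context: $H$ is a quasitriangular Hopf algebra over $\mathbb{C}$ with $\mathcal{R}=\mathcal{R}^{(1)}\otimes\mathcal{R}^{(2)}\in H\otimes H$ ($(\Delta\otimes{\rm id})\mathcal{R}=\mathcal{R}_{13}\mathcal{R}_{23}$, $({\rm id}\otimes\Delta)\mathcal{R}=\mathcal{R}_{13}\mathcal{R}_{12}$, $\Delta^{\rm op}=\mathcal{R}\Delta\mathcal{R}^{-1}$), $\mathcal{R}^{-1}=\mathcal{R}^{-(1)}\otimes\mathcal{R}^{-(2)}$, $\mathcal{R}'$ a second copy of $\mathcal{R}$. $A$ is a Hopf algebra non-degenerately paired with $H$ (Hopf pairing $\langle hg,a\rangle=\langle h,a_{(1)}\rangle\langle g,a_{(2)}\rangle$, $\langle h,ab\rangle=\langle h_{(1)},a\rangle\langle h_{(2)},b\rangle$). $\mathcal{Q}(a)=(a\otimes{\rm id})(\mathcal{R}_{21}\mathcal{R})$, and factorisable means $\mathcal{Q}:A\to H$ is bijective; in this case $\theta$ is an isomorphism of algebras onto $H\otimes H$ (tensor product algebra). The quantum double $H\bowtie A^{\rm op}$ is $H\otimes A$ with product $(h\otimes a)(g\otimes b)=hg_{(2)}\otimes ba_{(2)}\langle g_{(1)},a_{(1)}\rangle\langle g_{(3)},Sa_{(3)}\rangle$. *)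

theory Defs
  imports Complex_Main
begin

definition cvs :: "(complex \<Rightarrow> 'v::ab_group_add \<Rightarrow> 'v) \<Rightarrow> bool" where
  "cvs sc \<longleftrightarrow>
     (\<forall>z x y. sc z (x + y) = sc z x + sc z y) \<and>
     (\<forall>z w x. sc (z + w) x = sc z x + sc w x) \<and>
     (\<forall>z w x. sc (z * w) x = sc z (sc w x)) \<and>
     (\<forall>x. sc 1 x = x)"

definition calg :: "(complex \<Rightarrow> 'v::ring_1 \<Rightarrow> 'v) \<Rightarrow> bool" where
  "calg sc \<longleftrightarrow> cvs sc \<and> (\<forall>z x y. sc z (x * y) = sc z x * y \<and> sc z (x * y) = x * sc z y)"

definition clin :: "(complex \<Rightarrow> 'v::ab_group_add \<Rightarrow> 'v) \<Rightarrow> (complex \<Rightarrow> 'w::ab_group_add \<Rightarrow> 'w)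
    \<Rightarrow> ('v \<Rightarrow> 'w) \<Rightarrow> bool" where
  "clin sc1 sc2 f \<longleftrightarrow> (\<forall>x y. f (x + y) = f x + f y) \<and> (\<forall>z x. f (sc1 z x) = sc2 z (f x))"

definition bilin :: "(complex \<Rightarrow> 'v::ab_group_add \<Rightarrow> 'v) \<Rightarrow> (complex \<Rightarrow> 'w::ab_group_add \<Rightarrow> 'w)
    \<Rightarrow> ('v \<Rightarrow> 'w \<Rightarrow> complex) \<Rightarrow> bool" where
  "bilin sc1 sc2 f \<longleftrightarrow> (\<forall>y. clin sc1 (*) (\<lambda>x. f x y)) \<and> (\<forall>x. clin sc2 (*) (\<lambda>y. f x y))"

definition trilin :: "(complex \<Rightarrow> 'v::ab_group_add \<Rightarrow> 'v) \<Rightarrow> ('v \<Rightarrow> 'v \<Rightarrow> 'v \<Rightarrow> complex) \<Rightarrow> bool" where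
  "trilin sc f \<longleftrightarrow> (\<forall>y w. clin sc (*) (\<lambda>x. f x y w)) \<and> (\<forall>x w. clin sc (*) (\<lambda>y. f x y w))
      \<and> (\<forall>x y. clin sc (*) (\<lambda>w. f x y w))"

text \<open>A list of pairs represents the sum of the corresponding pure tensors.  Two such
  representatives denote the same element of the algebraic tensor product iff all
  complex bilinear (resp. trilinear) forms agree on them.\<close>

definition teq2 :: "(complex \<Rightarrow> 'v::ab_group_add \<Rightarrow> 'v) \<Rightarrow> ('v \<times> 'v) list \<Rightarrow> ('v \<times> 'v) list \<Rightarrow> bool" where
  "teq2 sc xs ys \<longleftrightarrow> (\<forall>f. bilin sc sc f \<longrightarrow>
     sum_list (map (\<lambda>(x, y). f x y) xs) = sum_list (map (\<lambda>(x, y). f x y) ys))"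

definition teq3 :: "(complex \<Rightarrow> 'v::ab_group_add \<Rightarrow> 'v) \<Rightarrow> ('v \<times> 'v \<times> 'v) list \<Rightarrow> ('v \<times> 'v \<times> 'v) list \<Rightarrow> bool" where
  "teq3 sc xs ys \<longleftrightarrow> (\<forall>f. trilin sc f \<longrightarrow>
     sum_list (map (\<lambda>(x, y, w). f x y w) xs) = sum_list (map (\<lambda>(x, y, w). f x y w) ys))"

definition tmul2 :: "('v::times \<times> 'v) list \<Rightarrow> ('v \<times> 'v) list \<Rightarrow> ('v \<times> 'v) list" where
  "tmul2 xs ys = [(x * x', y * y'). (x, y) \<leftarrow> xs, (x', y') \<leftarrow> ys]"

text \<open>Iterated coproduct in Sweedler form: a(1) \<otimes> a(2) \<otimes> a(3).\<close>
definition delta3 :: "('v \<Rightarrow> ('v \<times> 'v) list) \<Rightarrow> 'v \<Rightarrow> ('v \<times> 'v \<times> 'v) list" where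
  "delta3 \<Delta> a = [(x, y, w). (x, u) \<leftarrow> \<Delta> a, (y, w) \<leftarrow> \<Delta> u]"

definition hopf :: "(complex \<Rightarrow> 'v::ring_1 \<Rightarrow> 'v) \<Rightarrow> ('v \<Rightarrow> ('v \<times> 'v) list) \<Rightarrow> ('v \<Rightarrow> complex)
    \<Rightarrow> ('v \<Rightarrow> 'v) \<Rightarrow> bool" where
  "hopf sc \<Delta> \<epsilon> S \<longleftrightarrow> calg sc \<and>
     \<comment> \<open>coproduct: linear algebra map, coassociative\<close>
     (\<forall>x y. teq2 sc (\<Delta> (x + y)) (\<Delta> x @ \<Delta> y)) \<and>
     (\<forall>z x. teq2 sc (\<Delta> (sc z x)) (map (\<lambda>(u, v). (sc z u, v)) (\<Delta> x))) \<and>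
     (\<forall>x y. teq2 sc (\<Delta> (x * y)) (tmul2 (\<Delta> x) (\<Delta> y))) \<and>
     teq2 sc (\<Delta> 1) [(1, 1)] \<and>
     (\<forall>x. teq3 sc [(u, v, w). (y, w) \<leftarrow> \<Delta> x, (u, v) \<leftarrow> \<Delta> y] (delta3 \<Delta> x)) \<and>
     \<comment> \<open>counit: linear algebra map, counit axioms\<close>
     clin sc (*) \<epsilon> \<and> (\<forall>x y. \<epsilon> (x * y) = \<epsilon> x * \<epsilon> y) \<and> \<epsilon> 1 = 1 \<and>
     (\<forall>x. sum_list (map (\<lambda>(u, v). sc (\<epsilon> u) v) (\<Delta> x)) = x) \<and>
     (\<forall>x. sum_list (map (\<lambda>(u, v). sc (\<epsilon> v) u) (\<Delta> x)) = x) \<and>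
     \<comment> \<open>antipode\<close>
     clin sc sc S \<and>
     (\<forall>x. sum_list (map (\<lambda>(u, v). S u * v) (\<Delta> x)) = sc (\<epsilon> x) 1) \<and>
     (\<forall>x. sum_list (map (\<lambda>(u, v). u * S v) (\<Delta> x)) = sc (\<epsilon> x) 1)"

definition hopf_pairing ::
  "(complex \<Rightarrow> 'h::ring_1 \<Rightarrow> 'h) \<Rightarrow> ('h \<Rightarrow> ('h \<times> 'h) list) \<Rightarrow> ('h \<Rightarrow> complex) \<Rightarrow> ('h \<Rightarrow> 'h) \<Rightarrow>
   (complex \<Rightarrow> 'a::ring_1 \<Rightarrow> 'a) \<Rightarrow> ('a \<Rightarrow> ('a \<times> 'a) list) \<Rightarrow> ('a \<Rightarrow> complex) \<Rightarrow> ('a \<Rightarrow> 'a) \<Rightarrow>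
   ('h \<Rightarrow> 'a \<Rightarrow> complex) \<Rightarrow> bool" where
  "hopf_pairing scH \<Delta>H \<epsilon>H SH scA \<Delta>A \<epsilon>A SA pr \<longleftrightarrow>
     bilin scH scA pr \<and>
     (\<forall>h g a. pr (h * g) a = sum_list (map (\<lambda>(a1, a2). pr h a1 * pr g a2) (\<Delta>A a))) \<and>
     (\<forall>h a b. pr h (a * b) = sum_list (map (\<lambda>(h1, h2). pr h1 a * pr h2 b) (\<Delta>H h))) \<and>
     (\<forall>a. pr 1 a = \<epsilon>A a) \<and> (\<forall>h. pr h 1 = \<epsilon>H h) \<and>
     (\<forall>h a. pr (SH h) a = pr h (SA a))"

definition nondegenerate :: "('h::zero \<Rightarrow> 'a::zero \<Rightarrow> complex) \<Rightarrow> bool" where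
  "nondegenerate pr \<longleftrightarrow> (\<forall>h. (\<forall>a. pr h a = 0) \<longrightarrow> h = 0) \<and> (\<forall>a. (\<forall>h. pr h a = 0) \<longrightarrow> a = 0)"

text \<open>R = sum of R(1) \<otimes> R(2) (list R), with inverse R^-1 (list Rinv).\<close>
definition quasitriangular :: "(complex \<Rightarrow> 'h::ring_1 \<Rightarrow> 'h) \<Rightarrow> ('h \<Rightarrow> ('h \<times> 'h) list)
    \<Rightarrow> ('h \<times> 'h) list \<Rightarrow> ('h \<times> 'h) list \<Rightarrow> bool" where
  "quasitriangular sc \<Delta> R Rinv \<longleftrightarrow>
     teq2 sc (tmul2 R Rinv) [(1, 1)] \<and> teq2 sc (tmul2 Rinv R) [(1, 1)] \<and>
     teq3 sc [(u, v, q). (r, q) \<leftarrow> R, (u, v) \<leftarrow> \<Delta> r] [(r, r', q * q'). (r, q) \<leftarrow> R, (r', q') \<leftarrow> R] \<and>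
     teq3 sc [(r, u, v). (r, q) \<leftarrow> R, (u, v) \<leftarrow> \<Delta> q] [(r * r', q', q). (r, q) \<leftarrow> R, (r', q') \<leftarrow> R] \<and>
     (\<forall>x. teq2 sc (map (\<lambda>(u, v). (v, u)) (\<Delta> x)) (tmul2 (tmul2 R (\<Delta> x)) Rinv))"

text \<open>Q(a) = (a \<otimes> id)(R21 R), where R21 R = sum R(2) R'(1) \<otimes> R(1) R'(2).\<close>
definition Qmap :: "(complex \<Rightarrow> 'h::ring_1 \<Rightarrow> 'h) \<Rightarrow> ('h \<times> 'h) list \<Rightarrow> ('h \<Rightarrow> 'a \<Rightarrow> complex) \<Rightarrow> 'a \<Rightarrow> 'h" where
  "Qmap scH R pr a = sum_list [scH (pr (q * r') a) (r * q'). (r, q) \<leftarrow> R, (r', q') \<leftarrow> R]"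

definition actL :: "(complex \<Rightarrow> 'a::ring_1 \<Rightarrow> 'a) \<Rightarrow> ('a \<Rightarrow> ('a \<times> 'a) list) \<Rightarrow> ('h \<Rightarrow> 'h)
    \<Rightarrow> ('h \<Rightarrow> 'a \<Rightarrow> complex) \<Rightarrow> 'h \<Rightarrow> 'a \<Rightarrow> 'a" where
  "actL scA \<Delta>A SH pr h a =
     sum_list (map (\<lambda>(a1, a2). scA (pr (SH h) a1) a2) (\<Delta>A a)) - scA (pr (SH h) a) 1"

definition actR :: "(complex \<Rightarrow> 'a::ring_1 \<Rightarrow> 'a) \<Rightarrow> ('a \<Rightarrow> ('a \<times> 'a) list)
    \<Rightarrow> ('h \<Rightarrow> 'a \<Rightarrow> complex) \<Rightarrow> 'h \<Rightarrow> 'a \<Rightarrow> 'a" where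
  "actR scA \<Delta>A pr g a =
     sum_list (map (\<lambda>(a1, a2). scA (pr g a2) a1) (\<Delta>A a)) - scA (pr g a) 1"

definition actHH :: "(complex \<Rightarrow> 'a::ring_1 \<Rightarrow> 'a) \<Rightarrow> ('a \<Rightarrow> ('a \<times> 'a) list) \<Rightarrow> ('h \<Rightarrow> 'h)
    \<Rightarrow> ('h \<Rightarrow> 'a \<Rightarrow> complex) \<Rightarrow> 'h \<Rightarrow> 'h \<Rightarrow> 'a \<Rightarrow> 'a" where
  "actHH scA \<Delta>A SH pr h g a = actL scA \<Delta>A SH pr h (actR scA \<Delta>A pr g a)"

text \<open>Pull-back along theta: theta(h \<otimes> b) \<triangleright> a, with
  theta(h \<otimes> b) = h(1) R^-(2) \<otimes> h(2) R(1) \<langle>R^-(1) R(2), b\<rangle>.\<close>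
definition theta_act :: "(complex \<Rightarrow> 'a::ring_1 \<Rightarrow> 'a) \<Rightarrow> ('a \<Rightarrow> ('a \<times> 'a) list) \<Rightarrow>
    ('h::ring_1 \<Rightarrow> ('h \<times> 'h) list) \<Rightarrow> ('h \<Rightarrow> 'h) \<Rightarrow> ('h \<times> 'h) list \<Rightarrow> ('h \<times> 'h) list \<Rightarrow>
    ('h \<Rightarrow> 'a \<Rightarrow> complex) \<Rightarrow> 'h \<Rightarrow> 'a \<Rightarrow> 'a \<Rightarrow> 'a" where
  "theta_act scA \<Delta>A \<Delta>H SH R Rinv pr h b a =
     sum_list [scA (pr (s * q) b) (actHH scA \<Delta>A SH pr (h1 * t) (h2 * r) a).
               (h1, h2) \<leftarrow> \<Delta>H h, (s, t) \<leftarrow> Rinv, (r, q) \<leftarrow> R]"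

definition hact :: "(complex \<Rightarrow> 'a::ring_1 \<Rightarrow> 'a) \<Rightarrow> ('a \<Rightarrow> ('a \<times> 'a) list) \<Rightarrow> ('a \<Rightarrow> 'a)
    \<Rightarrow> ('h \<Rightarrow> 'a \<Rightarrow> complex) \<Rightarrow> 'h \<Rightarrow> 'a \<Rightarrow> 'a" where
  "hact scA \<Delta>A SA pr h a =
     sum_list (map (\<lambda>(a1, a2, a3). scA (pr h (SA a1 * a3)) a2) (delta3 \<Delta>A a))"

definition bact :: "(complex \<Rightarrow> 'h::ring_1 \<Rightarrow> 'h) \<Rightarrow> (complex \<Rightarrow> 'a::ring_1 \<Rightarrow> 'a) \<Rightarrow>
    ('a \<Rightarrow> ('a \<times> 'a) list) \<Rightarrow> ('h \<times> 'h) list \<Rightarrow> ('h \<Rightarrow> 'a \<Rightarrow> complex) \<Rightarrow> 'a \<Rightarrow> 'a \<Rightarrow> 'a" where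
  "bact scH scA \<Delta>A R pr b a =
     sum_list [scA (pr (r' * q) b * pr q' a1 * pr r a3) a2.
               (r', q') \<leftarrow> R, (r, q) \<leftarrow> R, (a1, a2, a3) \<leftarrow> delta3 \<Delta>A a]
     - scA (pr (Qmap scH R pr a) b) 1"

end

theory Submission
  imports Defs
begin

lemma addhom_zero: fixes f :: "'v::ab_group_add \<Rightarrow> 'w::ab_group_add"
  assumes "\<And>x y. f (x + y) = f x + f y" shows "f 0 = 0"
proof -
  have "f 0 = f 0 + f 0" using assms[of 0 0] by simp
  thus ?thesis by simp
qed

lemma addhom_minus: fixes f :: "'v::ab_group_add \<Rightarrow> 'w::ab_group_add"
  assumes "\<And>x y. f (x + y) = f x + f y" shows "f (x - y) = f x - f y"
proof -
  have "f x = f (x - y) + f y" using assms[of "x - y" y] by simp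
  thus ?thesis by (simp add: algebra_simps)
qed

lemma addhom_sum_list: fixes f :: "'v::ab_group_add \<Rightarrow> 'w::ab_group_add"
  assumes "\<And>x y. f (x + y) = f x + f y"
  shows "f (sum_list (map g xs)) = sum_list (map (\<lambda>x. f (g x)) xs)"
  by (induction xs) (simp_all add: assms addhom_zero[OF assms])

lemma sum_list_swap: fixes f :: "'b \<Rightarrow> 'c \<Rightarrow> 'd::comm_monoid_add"
  shows "sum_list (map (\<lambda>x. sum_list (map (\<lambda>y. f x y) ys)) xs) =
         sum_list (map (\<lambda>y. sum_list (map (\<lambda>x. f x y) xs)) ys)"
  by (induction xs) (simp_all add: sum_list_addf)

lemma sum_list_concat_map: "sum_list (map f (concat (map g xs))) = sum_list (map (\<lambda>x. sum_list (map f (g x))) xs)"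
  by (induction xs) simp_all

locale hset =
  fixes scH :: "complex \<Rightarrow> 'h::ring_1 \<Rightarrow> 'h" and \<Delta>H :: "'h \<Rightarrow> ('h \<times> 'h) list"
    and \<epsilon>H :: "'h \<Rightarrow> complex" and SH :: "'h \<Rightarrow> 'h"
    and scA :: "complex \<Rightarrow> 'a::ring_1 \<Rightarrow> 'a" and \<Delta>A :: "'a \<Rightarrow> ('a \<times> 'a) list"
    and \<epsilon>A :: "'a \<Rightarrow> complex" and SA :: "'a \<Rightarrow> 'a"
    and pr :: "'h \<Rightarrow> 'a \<Rightarrow> complex"
    and R Rinv :: "('h \<times> 'h) list"
  assumes H: "hopf scH \<Delta>H \<epsilon>H SH"
    and A: "hopf scA \<Delta>A \<epsilon>A SA"
    and P: "hopf_pairing scH \<Delta>H \<epsilon>H SH scA \<Delta>A \<epsilon>A SA pr"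
    and ND: "nondegenerate pr"
    and QT: "quasitriangular scH \<Delta>H R Rinv"
begin

lemma calgH: "calg scH" using H unfolding hopf_def by simp
lemma calgA: "calg scA" using A unfolding hopf_def by simp
lemma cvsH: "cvs scH" using calgH unfolding calg_def by simp
lemma cvsA: "cvs scA" using calgA unfolding calg_def by simp

lemma scH_add: "scH z (x + y) = scH z x + scH z y" using cvsH unfolding cvs_def by simp
lemma scH_addc: "scH (z + w) x = scH z x + scH w x" using cvsH unfolding cvs_def by simp
lemma scH_mult: "scH (z * w) x = scH z (scH w x)" using cvsH unfolding cvs_def by simp
lemma scH_one: "scH 1 x = x" using cvsH unfolding cvs_def by simp
lemma scH_left: "scH z x * y = scH z (x * y)" using calgH unfolding calg_def by metis
lemma scH_right: "x * scH z y = scH z (x * y)" using calgH unfolding calg_def by metis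
lemma scA_add: "scA z (x + y) = scA z x + scA z y" using cvsA unfolding cvs_def by simp
lemma scA_addc: "scA (z + w) x = scA z x + scA w x" using cvsA unfolding cvs_def by simp
lemma scA_mult: "scA (z * w) x = scA z (scA w x)" using cvsA unfolding cvs_def by simp
lemma scA_one: "scA 1 x = x" using cvsA unfolding cvs_def by simp
lemma scA_left: "scA z x * y = scA z (x * y)" using calgA unfolding calg_def by metis
lemma scA_right: "x * scA z y = scA z (x * y)" using calgA unfolding calg_def by metis

lemma scH_comm: "scH z (scH w x) = scH w (scH z x)"
  by (metis mult.commute scH_mult)

lemma bilP: "bilin scH scA pr" using P unfolding hopf_pairing_def by simp
lemma prL_add: "pr (x + y) a = pr x a + pr y a" using bilP unfolding bilin_def clin_def by simp
lemma prL_sc: "pr (scH z x) a = z * pr x a" using bilP unfolding bilin_def clin_def by simp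
lemma prR_add: "pr x (a + b) = pr x a + pr x b" using bilP unfolding bilin_def clin_def by simp
lemma prR_sc: "pr x (scA z a) = z * pr x a" using bilP unfolding bilin_def clin_def by simp

lemma pr_multH: "pr (h * g) a = sum_list (map (\<lambda>(a1, a2). pr h a1 * pr g a2) (\<Delta>A a))"
  using P unfolding hopf_pairing_def by simp
lemma pr_multA: "pr h (a * b) = sum_list (map (\<lambda>(h1, h2). pr h1 a * pr h2 b) (\<Delta>H h))"
  using P unfolding hopf_pairing_def by simp
lemma pr_oneH: "pr 1 a = \<epsilon>A a" using P unfolding hopf_pairing_def by simp
lemma pr_oneA: "pr h 1 = \<epsilon>H h" using P unfolding hopf_pairing_def by simp
lemma pr_S: "pr (SH h) a = pr h (SA a)" using P unfolding hopf_pairing_def by simp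

lemma SHlin: "clin scH scH SH" using H unfolding hopf_def by simp
lemma SH_add: "SH (x + y) = SH x + SH y" using SHlin unfolding clin_def by simp
lemma SH_sc: "SH (scH z x) = scH z (SH x)" using SHlin unfolding clin_def by simp
lemma \<epsilon>Hlin: "clin scH (*) \<epsilon>H" using H unfolding hopf_def by simp
lemma \<epsilon>H_add: "\<epsilon>H (x + y) = \<epsilon>H x + \<epsilon>H y" using \<epsilon>Hlin unfolding clin_def by simp
lemma \<epsilon>H_sc: "\<epsilon>H (scH z x) = z * \<epsilon>H x" using \<epsilon>Hlin unfolding clin_def by simp
lemma \<epsilon>H_mult: "\<epsilon>H (x * y) = \<epsilon>H x * \<epsilon>H y" using H unfolding hopf_def by simp
lemma \<epsilon>H_1: "\<epsilon>H 1 = 1" using H unfolding hopf_def by simp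
lemma counitH1: "sum_list (map (\<lambda>(u, v). scH (\<epsilon>H u) v) (\<Delta>H x)) = x" using H unfolding hopf_def by simp
lemma counitH2: "sum_list (map (\<lambda>(u, v). scH (\<epsilon>H v) u) (\<Delta>H x)) = x" using H unfolding hopf_def by simp
lemma antipH1: "sum_list (map (\<lambda>(u, v). SH u * v) (\<Delta>H x)) = scH (\<epsilon>H x) 1" using H unfolding hopf_def by simp
lemma antipH2: "sum_list (map (\<lambda>(u, v). u * SH v) (\<Delta>H x)) = scH (\<epsilon>H x) 1" using H unfolding hopf_def by simp
lemma teqH_mult: "teq2 scH (\<Delta>H (x * y)) (tmul2 (\<Delta>H x) (\<Delta>H y))" using H unfolding hopf_def by simp
lemma teqH_1: "teq2 scH (\<Delta>H 1) [(1, 1)]" using H unfolding hopf_def by simp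
lemma teqH_coassoc: "teq3 scH [(u, v, w). (y, w) \<leftarrow> \<Delta>H x, (u, v) \<leftarrow> \<Delta>H y] (delta3 \<Delta>H x)"
  using H unfolding hopf_def by simp

lemma \<epsilon>Alin: "clin scA (*) \<epsilon>A" using A unfolding hopf_def by simp
lemma \<epsilon>A_add: "\<epsilon>A (x + y) = \<epsilon>A x + \<epsilon>A y" using \<epsilon>Alin unfolding clin_def by simp
lemma \<epsilon>A_sc: "\<epsilon>A (scA z x) = z * \<epsilon>A x" using \<epsilon>Alin unfolding clin_def by simp
lemma \<epsilon>A_1: "\<epsilon>A 1 = 1" using A unfolding hopf_def by simp

lemma QT1: "teq2 scH (tmul2 R Rinv) [(1, 1)]" using QT unfolding quasitriangular_def by simp
lemma QT2: "teq2 scH (tmul2 Rinv R) [(1, 1)]" using QT unfolding quasitriangular_def by simp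
lemma QT3: "teq3 scH [(u, v, q). (r, q) \<leftarrow> R, (u, v) \<leftarrow> \<Delta>H r] [(r, r', q * q'). (r, q) \<leftarrow> R, (r', q') \<leftarrow> R]"
  using QT unfolding quasitriangular_def by simp
lemma QT4: "teq3 scH [(r, u, v). (r, q) \<leftarrow> R, (u, v) \<leftarrow> \<Delta>H q] [(r * r', q', q). (r, q) \<leftarrow> R, (r', q') \<leftarrow> R]"
  using QT unfolding quasitriangular_def by simp

lemmas prL_minus = addhom_minus[of "\<lambda>x. pr x a" for a, OF prL_add]
lemmas prR_minus = addhom_minus[of "pr x" for x, OF prR_add]
lemmas prL_sum = addhom_sum_list[of "\<lambda>x. pr x a" for a, OF prL_add]
lemmas prR_sum = addhom_sum_list[of "pr x" for x, OF prR_add]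
lemmas prL_zero = addhom_zero[of "\<lambda>x. pr x a" for a, OF prL_add, simplified]
lemmas prR_zero = addhom_zero[of "pr x" for x, OF prR_add]
lemmas SH_sum = addhom_sum_list[of SH, OF SH_add]
lemmas SH_zero = addhom_zero[of SH, OF SH_add]
lemmas \<epsilon>H_sum = addhom_sum_list[of \<epsilon>H, OF \<epsilon>H_add]
lemmas \<epsilon>A_sum = addhom_sum_list[of \<epsilon>A, OF \<epsilon>A_add]
lemmas \<epsilon>A_minus = addhom_minus[of \<epsilon>A, OF \<epsilon>A_add]

lemma scH_sum: "scH z (sum_list (map g xs)) = sum_list (map (\<lambda>x. scH z (g x)) xs)"
  by (rule addhom_sum_list) (rule scH_add)
lemma scA_sum: "scA z (sum_list (map g xs)) = sum_list (map (\<lambda>x. scA z (g x)) xs)"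
  by (rule addhom_sum_list) (rule scA_add)

lemma extA: assumes "\<And>k. pr k x = pr k y" shows "x = y"
proof -
  have "\<forall>k. pr k (x - y) = 0" using assms by (simp add: prR_minus)
  hence "x - y = 0" using ND unfolding nondegenerate_def by blast
  thus ?thesis by simp
qed

lemma extH: assumes "\<And>a. pr x a = pr y a" shows "x = y"
proof -
  have "\<forall>a. pr (x - y) a = 0" using assms by (simp add: prL_minus)
  hence "x - y = 0" using ND unfolding nondegenerate_def by blast
  thus ?thesis by simp
qed

end


lemma sum_list_swap2:
  fixes f :: "'b \<Rightarrow> 'c \<Rightarrow> 'e \<Rightarrow> 'g \<Rightarrow> 'd::comm_monoid_add"
  shows "sum_list (map (\<lambda>(a,b). sum_list (map (\<lambda>(c,d). f a b c d) ys)) xs) =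
         sum_list (map (\<lambda>(c,d). sum_list (map (\<lambda>(a,b). f a b c d) xs)) ys)"
  using sum_list_swap[of "\<lambda>p q. f (fst p) (snd p) (fst q) (snd q)" ys xs]
  by (simp add: split_def)

context hset begin

lemma teq2_H:
  assumes T: "teq2 scH xs ys" and L1: "\<And>v. clin scH scH (\<lambda>u. B u v)" and L2: "\<And>u. clin scH scH (\<lambda>v. B u v)"
  shows "sum_list (map (\<lambda>(u,v). B u v) xs) = sum_list (map (\<lambda>(u,v). B u v) ys)"
proof (rule extH)
  fix a
  have bl: "bilin scH scH (\<lambda>u v. pr (B u v) a)"
    using L1 L2 unfolding bilin_def clin_def by (simp add: prL_add prL_sc)
  have e: "pr (sum_list (map (\<lambda>(u,v). B u v) zs)) a = sum_list (map (\<lambda>(u,v). pr (B u v) a) zs)" for zs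
    by (simp add: prL_sum split_def)
  show "pr (sum_list (map (\<lambda>(u,v). B u v) xs)) a = pr (sum_list (map (\<lambda>(u,v). B u v) ys)) a"
    unfolding e using T bl unfolding teq2_def by blast
qed

lemma teq3_H:
  assumes T: "teq3 scH xs ys" and L1: "\<And>v w. clin scH scH (\<lambda>u. B u v w)"
    and L2: "\<And>u w. clin scH scH (\<lambda>v. B u v w)" and L3: "\<And>u v. clin scH scH (\<lambda>w. B u v w)"
  shows "sum_list (map (\<lambda>(u,v,w). B u v w) xs) = sum_list (map (\<lambda>(u,v,w). B u v w) ys)"
proof (rule extH)
  fix a
  have bl: "trilin scH (\<lambda>u v w. pr (B u v w) a)"
    using L1 L2 L3 unfolding trilin_def clin_def by (simp add: prL_add prL_sc)
  have e: "pr (sum_list (map (\<lambda>(u,v,w). B u v w) zs)) a = sum_list (map (\<lambda>(u,v,w). pr (B u v w) a) zs)" for zs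
    by (simp add: prL_sum split_def)
  show "pr (sum_list (map (\<lambda>(u,v,w). B u v w) xs)) a = pr (sum_list (map (\<lambda>(u,v,w). B u v w) ys)) a"
    unfolding e using T bl unfolding teq3_def by blast
qed

lemma teq2_app: "teq2 scH xs ys \<Longrightarrow> bilin scH scH f \<Longrightarrow>
   sum_list (map (\<lambda>(u,v). f u v) xs) = sum_list (map (\<lambda>(u,v). f u v) ys)"
  unfolding teq2_def by blast

lemma teq3_app: "teq3 scH xs ys \<Longrightarrow> trilin scH f \<Longrightarrow>
   sum_list (map (\<lambda>(u,v,w). f u v w) xs) = sum_list (map (\<lambda>(u,v,w). f u v w) ys)"
  unfolding teq3_def by blast

lemma SH_one: "SH 1 = 1"
proof -
  have "sum_list (map (\<lambda>(u,v). SH u * v) (\<Delta>H 1)) = sum_list (map (\<lambda>(u,v). SH u * v) [(1,1)])"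
    by (rule teq2_H[OF teqH_1]) (simp_all add: clin_def SH_add SH_sc distrib_left distrib_right scH_left scH_right)
  thus ?thesis by (simp add: antipH1 \<epsilon>H_1 scH_one)
qed

end

lemma sumc2: "(\<And>a b. f a b = g a b) \<Longrightarrow> sum_list (map (\<lambda>(a,b). f a b) xs) = sum_list (map (\<lambda>(a,b). g a b) xs)"
  by simp

context hset begin

lemma SH_antimult: "SH (x * y) = SH y * SH x"
proof -
  define T where "T = (\<lambda>p q x2. sum_list (map (\<lambda>(y1,y2). sum_list (map (\<lambda>(p',q'). SH (p*p') * (q*q') * (SH y2 * SH x2)) (\<Delta>H y1))) (\<Delta>H y)))"
  have Sx: "SH z = sum_list (map (\<lambda>(x1,x2). scH (\<epsilon>H x1) (SH x2)) (\<Delta>H z))" for z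
    using arg_cong[OF counitH1[of z], of SH] by (simp add: SH_sum split_def SH_sc)
  have s1: "SH y * SH x = sum_list (map (\<lambda>(x1,x2). sum_list (map (\<lambda>(y1,y2). scH (\<epsilon>H x1 * \<epsilon>H y1) (SH y2 * SH x2)) (\<Delta>H y))) (\<Delta>H x))"
    apply (subst Sx[of x], subst Sx[of y])
    apply (simp add: sum_list_const_mult[symmetric] sum_list_mult_const[symmetric] split_def scH_left scH_right scH_mult[symmetric])
    apply (simp add: scH_sum scH_mult)
    done
  have s2: "scH (\<epsilon>H x1 * \<epsilon>H y1) w = sum_list (map (\<lambda>(p,q). sum_list (map (\<lambda>(p',q'). SH (p*p') * (q*q') * w) (\<Delta>H y1))) (\<Delta>H x1))" for x1 y1 w
  proof -
    have "scH (\<epsilon>H x1 * \<epsilon>H y1) w = sum_list (map (\<lambda>(u,v). SH u * v * w) (\<Delta>H (x1*y1)))"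
    proof -
      have "sum_list (map (\<lambda>(u,v). SH u * v * w) (\<Delta>H (x1*y1))) = sum_list (map (\<lambda>(u,v). SH u * v) (\<Delta>H (x1*y1))) * w"
        by (simp add: sum_list_mult_const[symmetric] split_def)
      thus ?thesis by (simp add: antipH1 \<epsilon>H_mult scH_left)
    qed
    also have "\<dots> = sum_list (map (\<lambda>(u,v). SH u * v * w) (tmul2 (\<Delta>H x1) (\<Delta>H y1)))"
      by (rule teq2_H[OF teqH_mult]) (simp_all add: clin_def SH_add SH_sc distrib_left distrib_right scH_left scH_right)
    also have "\<dots> = sum_list (map (\<lambda>(p,q). sum_list (map (\<lambda>(p',q'). SH (p*p') * (q*q') * w) (\<Delta>H y1))) (\<Delta>H x1))"
      by (simp add: tmul2_def sum_list_concat_map split_def comp_def)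
    finally show ?thesis .
  qed
  have s3: "SH y * SH x = sum_list (map (\<lambda>(x1,x2). sum_list (map (\<lambda>(p,q). T p q x2) (\<Delta>H x1))) (\<Delta>H x))"
    unfolding s1 s2 T_def by (rule sumc2, rule sum_list_swap2)
  have s4: "sum_list (map (\<lambda>(x1,x2). sum_list (map (\<lambda>(p,q). T p q x2) (\<Delta>H x1))) (\<Delta>H x))
      = sum_list (map (\<lambda>(p,u). sum_list (map (\<lambda>(q,x2). T p q x2) (\<Delta>H u))) (\<Delta>H x))"
  proof -
    have "sum_list (map (\<lambda>(u,v,w). T u v w) [(u,v,w). (y,w)\<leftarrow>\<Delta>H x, (u,v)\<leftarrow>\<Delta>H y]) = sum_list (map (\<lambda>(u,v,w). T u v w) (delta3 \<Delta>H x))"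
      by (rule teq3_H[OF teqH_coassoc]) (simp_all add: T_def clin_def SH_add SH_sc distrib_left distrib_right scH_left scH_right sum_list_addf scH_sum split_def)
    thus ?thesis by (simp add: delta3_def sum_list_concat_map split_def comp_def)
  qed
  have s5: "T p q x2 = sum_list (map (\<lambda>(p',u'). sum_list (map (\<lambda>(q',y2). SH (p*p') * (q*q') * (SH y2 * SH x2)) (\<Delta>H u'))) (\<Delta>H y))" for p q x2
  proof -
    have "sum_list (map (\<lambda>(u,v,w). SH (p*u) * (q*v) * (SH w * SH x2)) [(u,v,w). (y1,w)\<leftarrow>\<Delta>H y, (u,v)\<leftarrow>\<Delta>H y1]) = sum_list (map (\<lambda>(u,v,w). SH (p*u) * (q*v) * (SH w * SH x2)) (delta3 \<Delta>H y))"
      by (rule teq3_H[OF teqH_coassoc]) (simp_all add: clin_def SH_add SH_sc distrib_left distrib_right scH_left scH_right)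
    thus ?thesis by (simp add: T_def delta3_def sum_list_concat_map split_def comp_def)
  qed
  have s6: "sum_list (map (\<lambda>(q',y2). SH (p*p') * (q*q') * (SH y2 * SH x2)) (\<Delta>H u')) = scH (\<epsilon>H u') (SH (p*p') * q * SH x2)" for p p' q u' x2
  proof -
    have "sum_list (map (\<lambda>(q',y2). SH (p*p') * (q*q') * (SH y2 * SH x2)) (\<Delta>H u')) = sum_list (map (\<lambda>(q',y2). (SH (p*p') * q) * (q' * SH y2) * SH x2) (\<Delta>H u'))"
      by (rule sumc2) (simp add: mult.assoc)
    also have "\<dots> = (SH (p*p') * q) * sum_list (map (\<lambda>(q',y2). q' * SH y2) (\<Delta>H u')) * SH x2"
      by (simp add: split_def sum_list_const_mult sum_list_mult_const)
    also have "\<dots> = scH (\<epsilon>H u') (SH (p*p') * q * SH x2)"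
      by (simp add: antipH2 scH_left scH_right)
    finally show ?thesis .
  qed
  have s7: "sum_list (map (\<lambda>(p',u'). scH (\<epsilon>H u') (SH (p*p') * q * SH x2)) (\<Delta>H y)) = SH (p*y) * q * SH x2" for p q x2
  proof -
    have "SH (p*y) * q * SH x2 = SH (p * sum_list (map (\<lambda>(u,v). scH (\<epsilon>H v) u) (\<Delta>H y))) * q * SH x2"
      by (simp add: counitH2)
    also have "\<dots> = sum_list (map (\<lambda>(p',u'). scH (\<epsilon>H u') (SH (p*p') * q * SH x2)) (\<Delta>H y))"
      by (simp add: sum_list_const_mult[symmetric] SH_sum sum_list_mult_const[symmetric] split_def scH_right SH_sc scH_left)
    finally show ?thesis by simp
  qed
  have Tval: "T p q x2 = SH (p*y) * q * SH x2" for p q x2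
    unfolding s5 s6 s7 by simp
  have s8: "sum_list (map (\<lambda>(q,x2). SH (p*y) * q * SH x2) (\<Delta>H u)) = scH (\<epsilon>H u) (SH (p*y))" for p u
  proof -
    have "sum_list (map (\<lambda>(q,x2). SH (p*y) * q * SH x2) (\<Delta>H u)) = SH (p*y) * sum_list (map (\<lambda>(q,x2). q * SH x2) (\<Delta>H u))"
      by (simp add: split_def sum_list_const_mult[symmetric] mult.assoc)
    thus ?thesis by (simp add: antipH2 scH_right)
  qed
  have s9: "sum_list (map (\<lambda>(p,u). scH (\<epsilon>H u) (SH (p*y))) (\<Delta>H x)) = SH (x*y)"
  proof -
    have "SH (x*y) = SH (sum_list (map (\<lambda>(u,v). scH (\<epsilon>H v) u) (\<Delta>H x)) * y)"
      by (simp add: counitH2)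
    also have "\<dots> = sum_list (map (\<lambda>(p,u). scH (\<epsilon>H u) (SH (p*y))) (\<Delta>H x))"
      by (simp add: sum_list_mult_const[symmetric] SH_sum split_def scH_left SH_sc)
    finally show ?thesis by simp
  qed
  have "SH y * SH x = sum_list (map (\<lambda>(p,u). sum_list (map (\<lambda>(q,x2). T p q x2) (\<Delta>H u))) (\<Delta>H x))"
    using s3 s4 by simp
  thus ?thesis unfolding Tval s8 s9 by simp
qed
end

context hset begin

lemma sum_tmul2: "sum_list (map (\<lambda>(x,y). F x y) (tmul2 xs ys)) = sum_list (map (\<lambda>(a,b). sum_list (map (\<lambda>(c,d). F (a*c) (b*d)) ys)) xs)"
  by (simp add: tmul2_def sum_list_concat_map split_def comp_def)

lemma QT1_sum: "bilin scH scH g \<Longrightarrow> sum_list (map (\<lambda>(r,q). sum_list (map (\<lambda>(s,t). g (r*s) (q*t)) Rinv)) R) = g 1 1"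
  using teq2_app[OF QT1, of g] by (simp add: sum_tmul2)
lemma QT2_sum: "bilin scH scH g \<Longrightarrow> sum_list (map (\<lambda>(s,t). sum_list (map (\<lambda>(r,q). g (s*r) (t*q)) R)) Rinv) = g 1 1"
  using teq2_app[OF QT2, of g] by (simp add: sum_tmul2)
lemma QT3_sum: "trilin scH F \<Longrightarrow> sum_list (map (\<lambda>(r,q). sum_list (map (\<lambda>(u,v). F u v q) (\<Delta>H r))) R)
   = sum_list (map (\<lambda>(r,q). sum_list (map (\<lambda>(r',q'). F r r' (q*q')) R)) R)"
  using teq3_app[OF QT3, of F] by (simp add: sum_list_concat_map split_def comp_def)
lemma QT4_sum: "trilin scH F \<Longrightarrow> sum_list (map (\<lambda>(r,q). sum_list (map (\<lambda>(u,v). F r u v) (\<Delta>H q))) R)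
   = sum_list (map (\<lambda>(r,q). sum_list (map (\<lambda>(r',q'). F (r*r') q' q) R)) R)"
  using teq3_app[OF QT4, of F] by (simp add: sum_list_concat_map split_def comp_def)

lemma bl_addL: "bilin scH scH f \<Longrightarrow> f (x+y) z = f x z + f y z" unfolding bilin_def clin_def by simp
lemma bl_addR: "bilin scH scH f \<Longrightarrow> f z (x+y) = f z x + f z y" unfolding bilin_def clin_def by simp
lemma bl_scL: "bilin scH scH f \<Longrightarrow> f (scH c x) z = c * f x z" unfolding bilin_def clin_def by simp
lemma bl_scR: "bilin scH scH f \<Longrightarrow> f z (scH c x) = c * f z x" unfolding bilin_def clin_def by simp
lemma bl_sumL: "bilin scH scH f \<Longrightarrow> f (sum_list (map g xs)) z = sum_list (map (\<lambda>x. f (g x) z) xs)"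
  by (rule addhom_sum_list[of "\<lambda>x. f x z"]) (rule bl_addL)
lemma bl_sumR: "bilin scH scH f \<Longrightarrow> f z (sum_list (map g xs)) = sum_list (map (\<lambda>x. f z (g x)) xs)"
  by (rule addhom_sum_list[of "f z"]) (rule bl_addR)

lemma bilinI: "(\<And>x x' y. f (x+x') y = f x y + f x' y) \<Longrightarrow> (\<And>c x y. f (scH c x) y = c * f x y) \<Longrightarrow>
   (\<And>x y y'. f x (y+y') = f x y + f x y') \<Longrightarrow> (\<And>c x y. f x (scH c y) = c * f x y) \<Longrightarrow> bilin scH scH f"
  unfolding bilin_def clin_def by simp
lemma trilinI: "(\<And>x x' y w. f (x+x') y w = f x y w + f x' y w) \<Longrightarrow> (\<And>c x y w. f (scH c x) y w = c * f x y w) \<Longrightarrow>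
   (\<And>x y y' w. f x (y+y') w = f x y w + f x y' w) \<Longrightarrow> (\<And>c x y w. f x (scH c y) w = c * f x y w) \<Longrightarrow>
   (\<And>x y w w'. f x y (w+w') = f x y w + f x y w') \<Longrightarrow> (\<And>c x y w. f x y (scH c w) = c * f x y w) \<Longrightarrow> trilin scH f"
  unfolding trilin_def clin_def by simp

lemmas linsimps = distrib_left distrib_right SH_add SH_sc scH_left scH_right prL_add prL_sc
   \<epsilon>H_add \<epsilon>H_sc sum_list_addf split_def sum_list_const_mult mult.assoc mult.left_commute bl_addL bl_addR bl_scL bl_scR

lemma E1: "sum_list (map (\<lambda>(r,q). scH (\<epsilon>H q) r) R) = 1"
proof -
  define e1 where "e1 = sum_list (map (\<lambda>(r,q). scH (\<epsilon>H q) r) R)"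
  have i: "sum_list (map (\<lambda>(r,q). g r q) R) = sum_list (map (\<lambda>(r,q). g (r*e1) q) R)" if g: "bilin scH scH g" for g
  proof -
    have "sum_list (map (\<lambda>(r,q). sum_list (map (\<lambda>(u,v). g r (scH (\<epsilon>H u) v)) (\<Delta>H q))) R)
      = sum_list (map (\<lambda>(r,q). sum_list (map (\<lambda>(r',q'). g (r*r') (scH (\<epsilon>H q') q)) R)) R)"
      by (rule QT4_sum) (rule trilinI; use g in \<open>simp add: linsimps\<close>)
    moreover have "sum_list (map (\<lambda>(u,v). g r (scH (\<epsilon>H u) v)) (\<Delta>H q)) = g r q" for r q
      using bl_sumR[OF g, of r "\<lambda>(u,v). scH (\<epsilon>H u) v" "\<Delta>H q"] by (simp add: counitH1[unfolded split_def] split_def)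
    moreover have "sum_list (map (\<lambda>(r',q'). g (r*r') (scH (\<epsilon>H q') q)) R) = g (r*e1) q" for r q
      unfolding e1_def using g by (simp add: bl_sumL bl_scL bl_scR sum_list_const_mult[symmetric] split_def scH_right)
    ultimately show ?thesis by simp
  qed
  have "pr 1 a = pr e1 a" for a
  proof -
    define g where "g = (\<lambda>x y. sum_list (map (\<lambda>(s,t). pr (s*x) a * \<epsilon>H (t*y)) Rinv))"
    have bg: "bilin scH scH g" unfolding g_def by (rule bilinI; simp add: linsimps)
    have "sum_list (map (\<lambda>(r,q). g r q) R) = sum_list (map (\<lambda>(s,t). sum_list (map (\<lambda>(r,q). pr (s*r) a * \<epsilon>H (t*q)) R)) Rinv)"
      unfolding g_def by (rule sum_list_swap2)
    also have "\<dots> = pr 1 a * \<epsilon>H 1"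
      by (rule QT2_sum[of "\<lambda>x y. pr x a * \<epsilon>H y"]) (rule bilinI; simp add: linsimps)
    finally have 1: "sum_list (map (\<lambda>(r,q). g r q) R) = pr 1 a" by (simp add: \<epsilon>H_1)
    have "sum_list (map (\<lambda>(r,q). g (r*e1) q) R) = sum_list (map (\<lambda>(s,t). sum_list (map (\<lambda>(r,q). pr (s*r*e1) a * \<epsilon>H (t*q)) R)) Rinv)"
      unfolding g_def by (simp add: mult.assoc, rule sum_list_swap2)
    also have "\<dots> = pr (1*e1) a * \<epsilon>H 1"
      by (rule QT2_sum[of "\<lambda>x y. pr (x*e1) a * \<epsilon>H y"]) (rule bilinI; simp add: linsimps)
    finally have 2: "sum_list (map (\<lambda>(r,q). g (r*e1) q) R) = pr e1 a" by (simp add: \<epsilon>H_1)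
    show ?thesis using i[OF bg] 1 2 by simp
  qed
  hence "1 = e1" by (rule extH)
  thus ?thesis unfolding e1_def by simp
qed


lemma E2: "sum_list (map (\<lambda>(r,q). scH (\<epsilon>H r) q) R) = 1"
proof -
  define e2 where "e2 = sum_list (map (\<lambda>(r,q). scH (\<epsilon>H r) q) R)"
  have i: "sum_list (map (\<lambda>(r,q). g r q) R) = sum_list (map (\<lambda>(r,q). g r (e2*q)) R)" if g: "bilin scH scH g" for g
  proof -
    have "sum_list (map (\<lambda>(r,q). sum_list (map (\<lambda>(u,v). g (scH (\<epsilon>H u) v) q) (\<Delta>H r))) R)
      = sum_list (map (\<lambda>(r,q). sum_list (map (\<lambda>(r',q'). g (scH (\<epsilon>H r) r') (q*q')) R)) R)"
      by (rule QT3_sum) (rule trilinI; use g in \<open>simp add: linsimps\<close>)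
    also have "\<dots> = sum_list (map (\<lambda>(r',q'). sum_list (map (\<lambda>(r,q). g (scH (\<epsilon>H r) r') (q*q')) R)) R)"
      by (rule sum_list_swap2)
    also have "\<dots> = sum_list (map (\<lambda>(r',q'). g r' (e2*q')) R)"
      unfolding e2_def using g by (simp add: bl_sumR bl_scL bl_scR sum_list_mult_const[symmetric] split_def scH_left)
    finally have 1: "sum_list (map (\<lambda>(r,q). sum_list (map (\<lambda>(u,v). g (scH (\<epsilon>H u) v) q) (\<Delta>H r))) R) = sum_list (map (\<lambda>(r',q'). g r' (e2*q')) R)" .
    have "sum_list (map (\<lambda>(u,v). g (scH (\<epsilon>H u) v) q) (\<Delta>H r)) = g r q" for r q
      using bl_sumL[OF g, of "\<lambda>(u,v). scH (\<epsilon>H u) v" "\<Delta>H r" q] by (simp add: counitH1[unfolded split_def] split_def)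
    thus ?thesis using 1 by simp
  qed
  have "pr 1 a = pr e2 a" for a
  proof -
    define g where "g = (\<lambda>x y. sum_list (map (\<lambda>(s,t). \<epsilon>H (x*s) * pr (y*t) a) Rinv))"
    have bg: "bilin scH scH g" unfolding g_def by (rule bilinI; simp add: linsimps)
    have "sum_list (map (\<lambda>(r,q). g r q) R) = \<epsilon>H 1 * pr 1 a"
      unfolding g_def by (rule QT1_sum[of "\<lambda>x y. \<epsilon>H x * pr y a"]) (rule bilinI; simp add: linsimps)
    hence 1: "sum_list (map (\<lambda>(r,q). g r q) R) = pr 1 a" by (simp add: \<epsilon>H_1)
    have "sum_list (map (\<lambda>(r,q). g r (e2*q)) R) = \<epsilon>H 1 * pr (e2*1) a"
      unfolding g_def by (simp only: mult.assoc, rule QT1_sum[of "\<lambda>x y. \<epsilon>H x * pr (e2*y) a"]) (rule bilinI; simp add: linsimps)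
    hence 2: "sum_list (map (\<lambda>(r,q). g r (e2*q)) R) = pr e2 a" by (simp add: \<epsilon>H_1)
    show ?thesis using i[OF bg] 1 2 by simp
  qed
  hence "1 = e2" by (rule extH)
  thus ?thesis unfolding e2_def by simp
qed

lemma E3a: "bilin scH scH g \<Longrightarrow> sum_list (map (\<lambda>(r,q). sum_list (map (\<lambda>(r',q'). g (SH r * r') (q*q')) R)) R) = g 1 1"
proof -
  assume g: "bilin scH scH g"
  have "sum_list (map (\<lambda>(r,q). sum_list (map (\<lambda>(u,v). g (SH u * v) q) (\<Delta>H r))) R)
      = sum_list (map (\<lambda>(r,q). sum_list (map (\<lambda>(r',q'). g (SH r * r') (q*q')) R)) R)"
    by (rule QT3_sum) (rule trilinI; use g in \<open>simp add: linsimps\<close>)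
  moreover have "sum_list (map (\<lambda>(u,v). g (SH u * v) q) (\<Delta>H r)) = \<epsilon>H r * g 1 q" for r q
    using bl_sumL[OF g, of "\<lambda>(u,v). SH u * v" "\<Delta>H r" q] g by (simp add: antipH1[unfolded split_def] split_def bl_scL)
  moreover have "sum_list (map (\<lambda>(r,q). \<epsilon>H r * g 1 q) R) = g 1 1"
    using bl_sumR[OF g, of 1 "\<lambda>(r,q). scH (\<epsilon>H r) q" R] g E2 by (simp add: split_def bl_scR)
  ultimately show ?thesis by simp
qed

lemma E3: "bilin scH scH g \<Longrightarrow> sum_list (map (\<lambda>(r,q). g (SH r) q) R) = sum_list (map (\<lambda>(s,t). g s t) Rinv)"
proof -
  assume g: "bilin scH scH g"
  have "sum_list (map (\<lambda>(r,q). g (SH r) q) R) = sum_list (map (\<lambda>(r,q). sum_list (map (\<lambda>(r',q'). sum_list (map (\<lambda>(s,t). g (SH r * (r' * s)) (q * (q' * t))) Rinv)) R)) R)"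
  proof (rule sumc2)
    fix r q
    show "g (SH r) q = sum_list (map (\<lambda>(r',q'). sum_list (map (\<lambda>(s,t). g (SH r * (r' * s)) (q * (q' * t))) Rinv)) R)"
    proof -
      have b: "bilin scH scH (\<lambda>x y. g (SH r * x) (q * y))" by (rule bilinI; use g in \<open>simp add: linsimps\<close>)
      show ?thesis using QT1_sum[OF b] by simp
    qed
  qed
  also have "\<dots> = sum_list (map (\<lambda>(r,q). sum_list (map (\<lambda>(s,t). sum_list (map (\<lambda>(r',q'). g (SH r * (r' * s)) (q * (q' * t))) R)) Rinv)) R)"
    by (rule sumc2, rule sum_list_swap2)
  also have "\<dots> = sum_list (map (\<lambda>(s,t). sum_list (map (\<lambda>(r,q). sum_list (map (\<lambda>(r',q'). g (SH r * (r' * s)) (q * (q' * t))) R)) R)) Rinv)"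
    by (rule sum_list_swap2)
  also have "\<dots> = sum_list (map (\<lambda>(s,t). g s t) Rinv)"
  proof (rule sumc2)
    fix s t
    show "sum_list (map (\<lambda>(r,q). sum_list (map (\<lambda>(r',q'). g (SH r * (r' * s)) (q * (q' * t))) R)) R) = g s t"
    proof -
      have b: "bilin scH scH (\<lambda>x y. g (x * s) (y * t))" by (rule bilinI; use g in \<open>simp add: linsimps\<close>)
      show ?thesis using E3a[OF b] by (simp add: mult.assoc)
    qed
  qed
  finally show ?thesis .
qed

lemma E4: "bilin scH scH g \<Longrightarrow> sum_list (map (\<lambda>(r,q). sum_list (map (\<lambda>(r',q'). g (r*r') (SH q' * q)) R)) R) = g 1 1"
proof -
  assume g: "bilin scH scH g"
  have "sum_list (map (\<lambda>(r,q). sum_list (map (\<lambda>(u,v). g r (SH u * v)) (\<Delta>H q))) R)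
      = sum_list (map (\<lambda>(r,q). sum_list (map (\<lambda>(r',q'). g (r*r') (SH q' * q)) R)) R)"
    by (rule QT4_sum) (rule trilinI; use g in \<open>simp add: linsimps\<close>)
  moreover have "sum_list (map (\<lambda>(u,v). g r (SH u * v)) (\<Delta>H q)) = \<epsilon>H q * g r 1" for r q
    using bl_sumR[OF g, of r "\<lambda>(u,v). SH u * v" "\<Delta>H q"] g by (simp add: antipH1[unfolded split_def] split_def bl_scR)
  moreover have "sum_list (map (\<lambda>(r,q). \<epsilon>H q * g r 1) R) = g 1 1"
    using bl_sumL[OF g, of "\<lambda>(r,q). scH (\<epsilon>H q) r" R 1] g E1 by (simp add: split_def bl_scL)
  ultimately show ?thesis by simp
qed


lemma E5: assumes f: "bilin scH scH f"
  shows "sum_list (map (\<lambda>(r,q). f (SH r) (SH q)) R) = sum_list (map (\<lambda>(r,q). f r q) R)"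
proof -
  have "sum_list (map (\<lambda>(r,q). f (SH r) (SH q)) R) = sum_list (map (\<lambda>(a,b). sum_list (map (\<lambda>(s,t). sum_list (map (\<lambda>(c,d). f (SH a * (s*c)) (SH b * (t*d))) R)) Rinv)) R)"
  proof (rule sumc2)
    fix a b
    have bb: "bilin scH scH (\<lambda>x y. f (SH a * x) (SH b * y))" by (rule bilinI; use f in \<open>simp add: linsimps\<close>)
    show "f (SH a) (SH b) = sum_list (map (\<lambda>(s,t). sum_list (map (\<lambda>(c,d). f (SH a * (s*c)) (SH b * (t*d))) R)) Rinv)"
      using QT2_sum[OF bb] by simp
  qed
  also have "\<dots> = sum_list (map (\<lambda>(a,b). sum_list (map (\<lambda>(r,q). sum_list (map (\<lambda>(c,d). f (SH a * (SH r * c)) (SH b * (q*d))) R)) R)) R)"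
  proof (rule sumc2)
    fix a b
    have bb: "bilin scH scH (\<lambda>x y. sum_list (map (\<lambda>(c,d). f (SH a * (x*c)) (SH b * (y*d))) R))" by (rule bilinI; use f in \<open>simp add: linsimps\<close>)
    show "sum_list (map (\<lambda>(s,t). sum_list (map (\<lambda>(c,d). f (SH a * (s*c)) (SH b * (t*d))) R)) Rinv)
        = sum_list (map (\<lambda>(r,q). sum_list (map (\<lambda>(c,d). f (SH a * (SH r * c)) (SH b * (q*d))) R)) R)"
      using E3[OF bb] by simp
  qed
  also have "\<dots> = sum_list (map (\<lambda>(a,b). sum_list (map (\<lambda>(r,q). sum_list (map (\<lambda>(c,d). f (SH (r*a) * c) (SH b * q * d)) R)) R)) R)"
    by (simp add: SH_antimult mult.assoc)
  also have "\<dots> = sum_list (map (\<lambda>(a,b). sum_list (map (\<lambda>(c,d). sum_list (map (\<lambda>(r,q). f (SH (r*a) * c) (SH b * q * d)) R)) R)) R)"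
    by (rule sumc2, rule sum_list_swap2)
  also have "\<dots> = sum_list (map (\<lambda>(c,d). sum_list (map (\<lambda>(a,b). sum_list (map (\<lambda>(r,q). f (SH (r*a) * c) (SH b * q * d)) R)) R)) R)"
    by (rule sum_list_swap2)
  also have "\<dots> = sum_list (map (\<lambda>(c,d). sum_list (map (\<lambda>(r,q). sum_list (map (\<lambda>(a,b). f (SH (r*a) * c) (SH b * q * d)) R)) R)) R)"
    by (rule sumc2, rule sum_list_swap2)
  also have "\<dots> = sum_list (map (\<lambda>(c,d). f c d) R)"
  proof (rule sumc2)
    fix c d
    have bb: "bilin scH scH (\<lambda>x y. f (SH x * c) (y * d))" by (rule bilinI; use f in \<open>simp add: linsimps\<close>)
    show "sum_list (map (\<lambda>(r,q). sum_list (map (\<lambda>(a,b). f (SH (r*a) * c) (SH b * q * d)) R)) R) = f c d"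
      using E4[OF bb] by (simp add: SH_one)
  qed
  finally show ?thesis .
qed

lemma Gfact: assumes f: "bilin scH scH f"
  shows "sum_list (map (\<lambda>(s,t). f s (SH t)) Rinv) = sum_list (map (\<lambda>(r,q). f r q) R)"
proof -
  have bb: "bilin scH scH (\<lambda>x y. f x (SH y))" by (rule bilinI; use f in \<open>simp add: linsimps\<close>)
  show ?thesis using E3[OF bb] E5[OF f] by simp
qed

end

context hset begin

lemma pr_actL: "pr k (actL scA \<Delta>A SH pr h y) = pr (SH h * k) y - pr (SH h) y * \<epsilon>H k"
  unfolding actL_def by (simp add: prR_minus prR_sum split_def prR_sc pr_oneA pr_multH)

lemma pr_actR: "pr k (actR scA \<Delta>A pr g y) = pr (k * g) y - pr g y * \<epsilon>H k"
  unfolding actR_def by (simp add: prR_minus prR_sum split_def prR_sc pr_oneA pr_multH mult.commute)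

lemma pr_actHH: "pr k (actHH scA \<Delta>A SH pr h g a) = pr (SH h * k * g) a - \<epsilon>H k * pr (SH h * g) a"
  unfolding actHH_def by (simp add: pr_actL pr_actR \<epsilon>H_mult algebra_simps)

lemma part1: "\<epsilon>A (actHH scA \<Delta>A SH pr h g a) = 0"
  by (simp add: pr_oneH[symmetric] pr_actHH \<epsilon>H_1)

lemma part2: "actHH scA \<Delta>A SH pr (h + h') g a = actHH scA \<Delta>A SH pr h g a + actHH scA \<Delta>A SH pr h' g a"
  by (rule extA) (simp add: pr_actHH prR_add SH_add distrib_left distrib_right prL_add algebra_simps)

lemma part3: "actHH scA \<Delta>A SH pr h (g + g') a = actHH scA \<Delta>A SH pr h g a + actHH scA \<Delta>A SH pr h g' a"
  by (rule extA) (simp add: pr_actHH prR_add distrib_left distrib_right prL_add algebra_simps)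

lemma part4a: "actHH scA \<Delta>A SH pr (scH z h) g a = scA z (actHH scA \<Delta>A SH pr h g a)"
  by (rule extA) (simp add: pr_actHH prR_sc SH_sc scH_left scH_right prL_sc algebra_simps)

lemma part4b: "actHH scA \<Delta>A SH pr h (scH z g) a = scA z (actHH scA \<Delta>A SH pr h g a)"
  by (rule extA) (simp add: pr_actHH prR_sc scH_left scH_right prL_sc algebra_simps)

lemma part5: "actHH scA \<Delta>A SH pr h g (a + a') = actHH scA \<Delta>A SH pr h g a + actHH scA \<Delta>A SH pr h g a'"
  by (rule extA) (simp add: pr_actHH prR_add algebra_simps)

lemma part6: "actHH scA \<Delta>A SH pr h g (scA z a) = scA z (actHH scA \<Delta>A SH pr h g a)"
  by (rule extA) (simp add: pr_actHH prR_sc algebra_simps)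

lemma part7: "\<epsilon>A a = 0 \<Longrightarrow> actHH scA \<Delta>A SH pr 1 1 a = a"
  by (rule extA) (simp add: pr_actHH SH_one pr_oneH)

lemma part8: "actHH scA \<Delta>A SH pr (h * h') (g * g') a =
        actHH scA \<Delta>A SH pr h g (actHH scA \<Delta>A SH pr h' g' a)"
  by (rule extA) (simp add: pr_actHH SH_antimult \<epsilon>H_mult mult.assoc algebra_simps)

end

lemma sum_list_concat': "sum_list (concat xss) = sum_list (map sum_list xss)"
  by (induction xss) simp_all

context hset begin

lemma pr_hact: "pr k (hact scA \<Delta>A SA pr h Y) = sum_list (map (\<lambda>(h1,h2). pr (SH h1 * k * h2) Y) (\<Delta>H h))"
proof -
  have L: "pr k (hact scA \<Delta>A SA pr h Y) = sum_list (map (\<lambda>(y1,u). sum_list (map (\<lambda>(y2,y3).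
      sum_list (map (\<lambda>(h1,h2). pr (SH h1) y1 * (pr k y2 * pr h2 y3)) (\<Delta>H h))) (\<Delta>A u))) (\<Delta>A Y))"
    unfolding hact_def delta3_def
    by (simp add: prR_sum sum_list_concat_map split_def comp_def prR_sc pr_multA pr_S sum_list_mult_const[symmetric] sum_list_const_mult[symmetric] mult_ac)
  have "sum_list (map (\<lambda>(h1,h2). pr (SH h1 * k * h2) Y) (\<Delta>H h)) = sum_list (map (\<lambda>(h1,h2). sum_list (map (\<lambda>(y1,u). sum_list (map (\<lambda>(y2,y3).
      pr (SH h1) y1 * (pr k y2 * pr h2 y3)) (\<Delta>A u))) (\<Delta>A Y))) (\<Delta>H h))"
    by (simp add: mult.assoc pr_multH split_def sum_list_const_mult[symmetric])
  also have "\<dots> = sum_list (map (\<lambda>(y1,u). sum_list (map (\<lambda>(h1,h2). sum_list (map (\<lambda>(y2,y3).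
      pr (SH h1) y1 * (pr k y2 * pr h2 y3)) (\<Delta>A u))) (\<Delta>H h))) (\<Delta>A Y))"
    by (rule sum_list_swap2)
  also have "\<dots> = sum_list (map (\<lambda>(y1,u). sum_list (map (\<lambda>(y2,y3).
      sum_list (map (\<lambda>(h1,h2). pr (SH h1) y1 * (pr k y2 * pr h2 y3)) (\<Delta>H h))) (\<Delta>A u))) (\<Delta>A Y))"
    by (rule sumc2, rule sum_list_swap2)
  finally show ?thesis using L by simp
qed

lemma pr_bact: "pr m (bact scH scA \<Delta>A R pr b Y) =
   sum_list (map (\<lambda>(r',q'). sum_list (map (\<lambda>(r,q). pr (r'*q) b * pr (q' * m * r) Y) R)) R) - pr (Qmap scH R pr Y) b * \<epsilon>H m"
  unfolding bact_def delta3_def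
  by (simp add: sum_list_concat' prR_minus prR_sum sum_list_concat_map split_def comp_def prR_sc pr_oneA mult.assoc pr_multH
      sum_list_const_mult[symmetric] mult_ac)

lemma pr_Q: "pr (Qmap scH R pr a) b = sum_list (map (\<lambda>(r,q). sum_list (map (\<lambda>(r',q'). pr (q*r') a * pr (r*q') b) R)) R)"
  unfolding Qmap_def by (simp add: sum_list_concat' prL_sum sum_list_concat_map split_def comp_def prL_sc)

lemma pr_theta: "pr k (theta_act scA \<Delta>A \<Delta>H SH R Rinv pr h b a) =
  sum_list (map (\<lambda>(h1,h2). sum_list (map (\<lambda>(s,t). sum_list (map (\<lambda>(r,q).
     pr (s*q) b * (pr (SH (h1*t) * k * (h2*r)) a - \<epsilon>H k * pr (SH (h1*t) * (h2*r)) a)) R)) Rinv)) (\<Delta>H h))"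
  unfolding theta_act_def by (simp add: sum_list_concat' prR_sum sum_list_concat_map split_def comp_def prR_sc pr_actHH)


lemma part9: "theta_act scA \<Delta>A \<Delta>H SH R Rinv pr h b a = hact scA \<Delta>A SA pr h (bact scH scA \<Delta>A R pr b a)"
proof (rule extA)
  fix k
  define PL where "PL = (\<lambda>X. sum_list (map (\<lambda>(s,t). sum_list (map (\<lambda>(r,q). pr (s*q) b * pr (SH t * X * r) a) R)) Rinv))"
  define PR where "PR = (\<lambda>X. sum_list (map (\<lambda>(r',q'). sum_list (map (\<lambda>(r,q). pr (r'*q) b * pr (q' * X * r) a) R)) R))"
  have PLR: "PL X = PR X" for X
  proof -
    have bf: "bilin scH scH (\<lambda>x y. sum_list (map (\<lambda>(r,q). pr (x*q) b * pr (y*X*r) a) R))"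
      by (rule bilinI; simp add: linsimps)
    show ?thesis unfolding PL_def PR_def using Gfact[OF bf] by simp
  qed
  have PL_add: "PL (x+y) = PL x + PL y" for x y unfolding PL_def by (simp add: linsimps)
  have PL_sc: "PL (scH c x) = c * PL x" for c x unfolding PL_def by (simp add: linsimps)
  have PL_sum: "PL (sum_list (map g xs)) = sum_list (map (\<lambda>x. PL (g x)) xs)" for g and xs :: "('h\<times>'h) list"
    by (rule addhom_sum_list) (rule PL_add)
  have L1: "pr k (theta_act scA \<Delta>A \<Delta>H SH R Rinv pr h b a) = sum_list (map (\<lambda>(h1,h2). PL (SH h1 * k * h2) - \<epsilon>H k * PL (SH h1 * h2)) (\<Delta>H h))"
    unfolding pr_theta
  proof (rule sumc2)
    fix h1 h2
    show "sum_list (map (\<lambda>(s,t). sum_list (map (\<lambda>(r,q). pr (s*q) b * (pr (SH (h1*t) * k * (h2*r)) a - \<epsilon>H k * pr (SH (h1*t) * (h2*r)) a)) R)) Rinv)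
      = PL (SH h1 * k * h2) - \<epsilon>H k * PL (SH h1 * h2)"
      unfolding PL_def by (simp add: SH_antimult mult.assoc right_diff_distrib sum_list_subtractf split_def sum_list_const_mult mult.left_commute)
  qed
  also have "\<dots> = sum_list (map (\<lambda>(h1,h2). PL (SH h1 * k * h2)) (\<Delta>H h)) - \<epsilon>H k * PL (sum_list (map (\<lambda>(h1,h2). SH h1 * h2) (\<Delta>H h)))"
    by (simp add: sum_list_subtractf PL_sum split_def sum_list_const_mult)
  also have "\<dots> = sum_list (map (\<lambda>(h1,h2). PL (SH h1 * k * h2)) (\<Delta>H h)) - \<epsilon>H k * (\<epsilon>H h * PL 1)"
    by (simp add: antipH1 PL_sc)
  finally have L: "pr k (theta_act scA \<Delta>A \<Delta>H SH R Rinv pr h b a) = sum_list (map (\<lambda>(h1,h2). PR (SH h1 * k * h2)) (\<Delta>H h)) - \<epsilon>H k * (\<epsilon>H h * PR 1)"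
    by (simp add: PLR)
  have Q: "pr (Qmap scH R pr a) b = PR 1"
    unfolding pr_Q PR_def by (simp add: mult.commute)
  have eps1: "sum_list (map (\<lambda>(h1,h2). \<epsilon>H (SH h1 * h2)) (\<Delta>H h)) = \<epsilon>H h"
    using arg_cong[OF antipH1[of h], of \<epsilon>H] by (simp add: \<epsilon>H_sum split_def \<epsilon>H_sc \<epsilon>H_1)
  have eps2: "sum_list (map (\<lambda>(h1,h2). \<epsilon>H (SH h1 * k * h2)) (\<Delta>H h)) = \<epsilon>H k * \<epsilon>H h"
  proof -
    have "sum_list (map (\<lambda>(h1,h2). \<epsilon>H (SH h1 * k * h2)) (\<Delta>H h)) = \<epsilon>H k * sum_list (map (\<lambda>(h1,h2). \<epsilon>H (SH h1 * h2)) (\<Delta>H h))"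
      by (simp add: \<epsilon>H_mult split_def sum_list_const_mult[symmetric] mult_ac)
    thus ?thesis using eps1 by simp
  qed
  have "pr k (hact scA \<Delta>A SA pr h (bact scH scA \<Delta>A R pr b a)) =
      sum_list (map (\<lambda>(h1,h2). PR (SH h1 * k * h2) - PR 1 * \<epsilon>H (SH h1 * k * h2)) (\<Delta>H h))"
    unfolding pr_hact pr_bact PR_def Q[unfolded PR_def] by simp
  also have "\<dots> = sum_list (map (\<lambda>(h1,h2). PR (SH h1 * k * h2)) (\<Delta>H h)) - PR 1 * sum_list (map (\<lambda>(h1,h2). \<epsilon>H (SH h1 * k * h2)) (\<Delta>H h))"
    by (simp add: sum_list_subtractf split_def sum_list_const_mult)
  finally show "pr k (theta_act scA \<Delta>A \<Delta>H SH R Rinv pr h b a) = pr k (hact scA \<Delta>A SA pr h (bact scH scA \<Delta>A R pr b a))"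
    using L eps2 by (simp add: mult_ac)
qed

end

theorem proposition4p2:
  fixes scH :: "complex \<Rightarrow> 'h::ring_1 \<Rightarrow> 'h" and \<Delta>H :: "'h \<Rightarrow> ('h \<times> 'h) list"
    and \<epsilon>H :: "'h \<Rightarrow> complex" and SH :: "'h \<Rightarrow> 'h"
    and scA :: "complex \<Rightarrow> 'a::ring_1 \<Rightarrow> 'a" and \<Delta>A :: "'a \<Rightarrow> ('a \<times> 'a) list"
    and \<epsilon>A :: "'a \<Rightarrow> complex" and SA :: "'a \<Rightarrow> 'a"
    and pr :: "'h \<Rightarrow> 'a \<Rightarrow> complex"
    and R Rinv :: "('h \<times> 'h) list"
  assumes H: "hopf scH \<Delta>H \<epsilon>H SH"
    and A: "hopf scA \<Delta>A \<epsilon>A SA"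
    and P: "hopf_pairing scH \<Delta>H \<epsilon>H SH scA \<Delta>A \<epsilon>A SA pr"
    and ND: "nondegenerate pr"
    and QT: "quasitriangular scH \<Delta>H R Rinv"
    and FACT: "bij (Qmap scH R pr)"
  shows
    \<comment> \<open>the formulas define an action of the algebra H \<otimes> H on ker \<epsilon>\<close>
    "(\<forall>h g a. \<epsilon>A a = 0 \<longrightarrow> \<epsilon>A (actHH scA \<Delta>A SH pr h g a) = 0) \<and>
     (\<forall>h h' g a. \<epsilon>A a = 0 \<longrightarrow>
        actHH scA \<Delta>A SH pr (h + h') g a = actHH scA \<Delta>A SH pr h g a + actHH scA \<Delta>A SH pr h' g a) \<and>
     (\<forall>h g g' a. \<epsilon>A a = 0 \<longrightarrow>
        actHH scA \<Delta>A SH pr h (g + g') a = actHH scA \<Delta>A SH pr h g a + actHH scA \<Delta>A SH pr h g' a) \<and>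
     (\<forall>z h g a. \<epsilon>A a = 0 \<longrightarrow>
        actHH scA \<Delta>A SH pr (scH z h) g a = scA z (actHH scA \<Delta>A SH pr h g a) \<and>
        actHH scA \<Delta>A SH pr h (scH z g) a = scA z (actHH scA \<Delta>A SH pr h g a)) \<and>
     (\<forall>h g a a'. \<epsilon>A a = 0 \<longrightarrow> \<epsilon>A a' = 0 \<longrightarrow>
        actHH scA \<Delta>A SH pr h g (a + a') = actHH scA \<Delta>A SH pr h g a + actHH scA \<Delta>A SH pr h g a') \<and>
     (\<forall>z h g a. \<epsilon>A a = 0 \<longrightarrow>
        actHH scA \<Delta>A SH pr h g (scA z a) = scA z (actHH scA \<Delta>A SH pr h g a)) \<and>
     (\<forall>a. \<epsilon>A a = 0 \<longrightarrow> actHH scA \<Delta>A SH pr 1 1 a = a) \<and>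
     (\<forall>h h' g g' a. \<epsilon>A a = 0 \<longrightarrow>
        actHH scA \<Delta>A SH pr (h * h') (g * g') a =
        actHH scA \<Delta>A SH pr h g (actHH scA \<Delta>A SH pr h' g' a)) \<and>
     \<comment> \<open>its pull-back along theta is the stated action of the double\<close>
     (\<forall>h b a. \<epsilon>A a = 0 \<longrightarrow>
        theta_act scA \<Delta>A \<Delta>H SH R Rinv pr h b a =
        hact scA \<Delta>A SA pr h (bact scH scA \<Delta>A R pr b a))"
proof -
  interpret hset scH \<Delta>H \<epsilon>H SH scA \<Delta>A \<epsilon>A SA pr R Rinv
    using H A P ND QT by (rule hset.intro)
  show ?thesis
    by (simp add: part1 part2 part3 part4a part4b part5 part6 part7 part8 part9)
qed

end
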